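(* Let $\mathcal G$ be an étale groupoid and $K$ a compact subset of $\mathcal G$. Regard $\mathcal G$ as a left $\mathcal G$-space via multiplication (anchor map $r$), and let \[\Delta_K(\mathcal G)=\{\delta\subseteq\mathcal G\text{ finite nonempty}:\forall\gamma_1,\gamma_2\in\delta,\ r(\gamma_1)=r(\gamma_2),\ \gamma_1^{-1}\gamma_2\in K\}.\] Then (1) $(\mathcal G,\Delta_K(\mathcal G))$ is a finite-dimensional $\mathcal G$-simplicial complex; (2) it satisfies hypotheses $(H_1)$ and $(H_2)$; (3) it is proper and $\mathcal G$-compact.
   Context: Étale groupoids are locally compact Hausdorff with range map a local homeomorphism. A $\mathcal G$-simplicial complex is a pair $(Y,\Delta)$ with $Y$ a locally compact Hausdorff left $\mathcal G$-space whose anchor $\rho$ is a local homeomorphism, and $\Delta$ a family of finite nonempty subsets of $Y$, each contained in a fibre of $\rho$, closed under nonempty subsets and under $\delta\mapsto\gamma\delta$ (for $\delta\subseteq\rho^{-1}(s(\gamma))$); it is finite-dimensional if the cardinalities of elements of $\Delta$ are bounded. $(H_1)$: for every compact $K'\subseteq Y$, $\{y:\exists y'\in K',\{y,y'\}\in\Delta\}$ is compact. $(H_2)$: if nets $(y^{(i)}_\lambda)_\lambda$ converge to $y^{(i)}$ ($0\le i\le k$) and $\{y^{(0)}_\lambda,\dots,y^{(k)}_\lambda\}\in\Delta$ for all $\lambda$, then $\{y^{(0)},\dots,y^{(k)}\}\in\Delta$. $(Y,\Delta)$ is proper if the action on $Y$ is proper, and $\mathcal G$-compact if $\{y:\{y\}\in\Delta\}$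 equals $\mathcal GC$ for some compact $C$. *)

theory Defs
  imports "HOL-Analysis.Analysis"
begin

text \<open>A groupoid whose set of arrows is the whole type 'g.  It is given by
source s, range r, partial multiplication m (a b is defined iff s a = r b)
and inverse i.  Units are the arrows u with r u = u.\<close>

definition groupoid ::
  "('g \<Rightarrow> 'g) \<Rightarrow> ('g \<Rightarrow> 'g) \<Rightarrow> ('g \<Rightarrow> 'g \<Rightarrow> 'g) \<Rightarrow> ('g \<Rightarrow> 'g) \<Rightarrow> bool" where
  "groupoid s r m i \<longleftrightarrow>
     (\<forall>x. s (r x) = r x \<and> r (s x) = s x) \<and>
     (\<forall>a b. s a = r b \<longrightarrow> r (m a b) = r a \<and> s (m a b) = s b) \<and>
     (\<forall>a b c. s a = r b \<and> s b = r c \<longrightarrow> m (m a b) c = m a (m b c)) \<and>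
     (\<forall>a. m (r a) a = a \<and> m a (s a) = a) \<and>
     (\<forall>a. s (i a) = r a \<and> r (i a) = s a \<and> m a (i a) = r a \<and> m (i a) a = s a)"

definition units :: "('g \<Rightarrow> 'g) \<Rightarrow> 'g set" where
  "units r = {u. r u = u}"

definition local_homeo :: "('a::topological_space \<Rightarrow> 'b::topological_space) \<Rightarrow> 'a set \<Rightarrow> 'b set \<Rightarrow> bool" where
  "local_homeo f X T \<longleftrightarrow> f ` X \<subseteq> T \<and>
     (\<forall>x\<in>X. \<exists>U. openin (top_of_set X) U \<and> x \<in> U \<and> openin (top_of_set T) (f ` U) \<and>
                 (\<exists>g. homeomorphism U (f ` U) f g))"

definition etale_groupoid ::
  "('g::t2_space \<Rightarrow> 'g) \<Rightarrow> ('g \<Rightarrow> 'g) \<Rightarrow> ('g \<Rightarrow> 'g \<Rightarrow> 'g) \<Rightarrow> ('g \<Rightarrow> 'g) \<Rightarrow> bool" where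
  "etale_groupoid s r m i \<longleftrightarrow>
     groupoid s r m i \<and>
     locally compact (UNIV :: 'g set) \<and>
     continuous_on UNIV s \<and> continuous_on UNIV r \<and> continuous_on UNIV i \<and>
     continuous_on {(a, b). s a = r b} (\<lambda>(a, b). m a b) \<and>
     local_homeo r UNIV (units r)"

definition G_space ::
  "('g::t2_space \<Rightarrow> 'g) \<Rightarrow> ('g \<Rightarrow> 'g) \<Rightarrow> ('g \<Rightarrow> 'g \<Rightarrow> 'g) \<Rightarrow> ('g \<Rightarrow> 'g)
   \<Rightarrow> ('g \<Rightarrow> 'y::t2_space \<Rightarrow> 'y) \<Rightarrow> ('y \<Rightarrow> 'g) \<Rightarrow> bool" where
  "G_space s r m i act \<rho> \<longleftrightarrow>
     locally compact (UNIV :: 'y set) \<and>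
     (\<forall>y. \<rho> y \<in> units r) \<and>
     (\<forall>g y. s g = \<rho> y \<longrightarrow> \<rho> (act g y) = r g) \<and>
     (\<forall>y. act (\<rho> y) y = y) \<and>
     (\<forall>g h y. s g = r h \<and> s h = \<rho> y \<longrightarrow> act (m g h) y = act g (act h y)) \<and>
     continuous_on UNIV \<rho> \<and>
     continuous_on {(g, y). s g = \<rho> y} (\<lambda>(g, y). act g y) \<and>
     local_homeo \<rho> UNIV (units r)"

definition G_simplicial_complex ::
  "('g::t2_space \<Rightarrow> 'g) \<Rightarrow> ('g \<Rightarrow> 'g) \<Rightarrow> ('g \<Rightarrow> 'g \<Rightarrow> 'g) \<Rightarrow> ('g \<Rightarrow> 'g)
   \<Rightarrow> ('g \<Rightarrow> 'y::t2_space \<Rightarrow> 'y) \<Rightarrow> ('y \<Rightarrow> 'g) \<Rightarrow> 'y set set \<Rightarrow> bool" where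
  "G_simplicial_complex s r m i act \<rho> \<Delta> \<longleftrightarrow>
     G_space s r m i act \<rho> \<and>
     (\<forall>\<delta>\<in>\<Delta>. finite \<delta> \<and> \<delta> \<noteq> {} \<and> (\<exists>u. \<forall>y\<in>\<delta>. \<rho> y = u)) \<and>
     (\<forall>\<delta>\<in>\<Delta>. \<forall>\<delta>'. \<delta>' \<subseteq> \<delta> \<and> \<delta>' \<noteq> {} \<longrightarrow> \<delta>' \<in> \<Delta>) \<and>
     (\<forall>\<delta>\<in>\<Delta>. \<forall>g. (\<forall>y\<in>\<delta>. \<rho> y = s g) \<longrightarrow> act g ` \<delta> \<in> \<Delta>)"

definition finite_dimensional :: "'y set set \<Rightarrow> bool" where
  "finite_dimensional \<Delta> \<longleftrightarrow> (\<exists>n::nat. \<forall>\<delta>\<in>\<Delta>. card \<delta> \<le> n)"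

definition H1 :: "'y::topological_space set set \<Rightarrow> bool" where
  "H1 \<Delta> \<longleftrightarrow> (\<forall>K'. compact K' \<longrightarrow> compact {y. \<exists>y'\<in>K'. {y, y'} \<in> \<Delta>})"

text \<open>(H2), with nets represented as functions on an index type 'i converging
along a proper filter F on 'i (the filter of tails of a net); the index type is
passed explicitly.\<close>
definition H2 :: "'i itself \<Rightarrow> 'y::topological_space set set \<Rightarrow> bool" where
  "H2 _ \<Delta> \<longleftrightarrow>
     (\<forall>(k::nat) (F::'i filter) (f::'i \<Rightarrow> nat \<Rightarrow> 'y) (y::nat \<Rightarrow> 'y).
        F \<noteq> bot \<and> (\<forall>j\<le>k. ((\<lambda>l. f l j) \<longlongrightarrow> y j) F) \<and> (\<forall>l. f l ` {..k} \<in> \<Delta>)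
        \<longrightarrow> y ` {..k} \<in> \<Delta>)"

definition proper_action ::
  "('g::topological_space \<Rightarrow> 'g) \<Rightarrow> ('g \<Rightarrow> 'y::topological_space \<Rightarrow> 'y) \<Rightarrow> ('y \<Rightarrow> 'g) \<Rightarrow> bool" where
  "proper_action s act \<rho> \<longleftrightarrow>
     (\<forall>C :: ('y \<times> 'y) set. compact C \<longrightarrow>
        compact {(g, y). s g = \<rho> y \<and> (act g y, y) \<in> C})"

definition G_compact ::
  "('g \<Rightarrow> 'g) \<Rightarrow> ('g \<Rightarrow> 'y::topological_space \<Rightarrow> 'y) \<Rightarrow> ('y \<Rightarrow> 'g) \<Rightarrow> 'y set set \<Rightarrow> bool" where
  "G_compact s act \<rho> \<Delta> \<longleftrightarrow>
     (\<exists>C. compact C \<and> {y. {y} \<in> \<Delta>} = {act g c |g c. c \<in> C \<and> s g = \<rho> c})"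

definition Delta_K :: "('g \<Rightarrow> 'g) \<Rightarrow> ('g \<Rightarrow> 'g \<Rightarrow> 'g) \<Rightarrow> ('g \<Rightarrow> 'g) \<Rightarrow> 'g set \<Rightarrow> 'g set set" where
  "Delta_K r m i K = {\<delta>. finite \<delta> \<and> \<delta> \<noteq> {} \<and>
      (\<forall>a\<in>\<delta>. \<forall>b\<in>\<delta>. r a = r b \<and> m (i a) b \<in> K)}"

end

theory Submission imports Defs begin

context
  fixes s r :: "'g \<Rightarrow> 'g" and m :: "'g \<Rightarrow> 'g \<Rightarrow> 'g" and i :: "'g \<Rightarrow> 'g"
  assumes G: "groupoid s r m i"
begin

lemma ax:
  "s (r x) = r x" "r (s x) = s x"
  "s a = r b \<Longrightarrow> r (m a b) = r a" "s a = r b \<Longrightarrow> s (m a b) = s b"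
  "s a = r b \<Longrightarrow> s b = r c \<Longrightarrow> m (m a b) c = m a (m b c)"
  "m (r a) a = a" "m a (s a) = a"
  "s (i a) = r a" "r (i a) = s a" "m a (i a) = r a" "m (i a) a = s a"
  using G unfolding groupoid_def by auto

lemma rr: "r (r x) = r x" by (metis ax(1,2))
lemma ss: "s (s x) = s x" by (metis ax(1,2))

lemma cancelL: "s a = r b \<Longrightarrow> m (i a) (m a b) = b"
  by (metis ax(3,5,8,9,11,6) )

lemma cancelL2: "r a = r b \<Longrightarrow> m a (m (i a) b) = b"
  by (metis ax(5,8,9,10,6))

lemma inj_left: "s x = r y \<Longrightarrow> s x = r z \<Longrightarrow> m x y = m x z \<Longrightarrow> y = z"
  by (metis cancelL)

lemma inv_inv: "i (i a) = a"
proof -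
  have "i (i a) = m (i (i a)) (s a)" by (metis ax(7,8,9))
  also have "\<dots> = m (i (i a)) (m (i a) a)" by (simp add: ax(11))
  also have "\<dots> = m (m (i (i a)) (i a)) a" by (metis ax(5,8,9))
  also have "\<dots> = a" by (metis ax(6,8,11))
  finally show ?thesis .
qed

lemma inv_mul: "s a = r b \<Longrightarrow> i (m a b) = m (i b) (i a)"
proof -
  assume ab: "s a = r b"
  have rab: "r (m a b) = r a" using ab ax(3) by blast
  have sab: "s (m a b) = s b" using ab ax(4) by blast
  show ?thesis
  proof (rule inj_left[of "m a b"])
    show "s (m a b) = r (i (m a b))" by (simp add: ax(9))
    show "s (m a b) = r (m (i b) (i a))" using sab ab by (metis ax(3,8,9))
    have "m (m a b) (m (i b) (i a)) = m a (m b (m (i b) (i a)))" using ab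
      by (metis ax(3,5,8,9))
    also have "\<dots> = m a (m (m b (i b)) (i a))" using ab by (metis ax(5,8,9))
    also have "\<dots> = m a (i a)" using ab by (metis ax(10,6,9))
    also have "\<dots> = r (m a b)" using rab ax(10) by simp
    finally show "m (m a b) (i (m a b)) = m (m a b) (m (i b) (i a))" by (simp add: ax(10))
  qed
qed

lemma inv_act: "s g = r a \<Longrightarrow> s g = r b \<Longrightarrow> m (i (m g a)) (m g b) = m (i a) b"
proof -
  assume ga: "s g = r a" and gb: "s g = r b"
  have "m (i (m g a)) (m g b) = m (m (i a) (i g)) (m g b)" using ga inv_mul by simp
  also have "\<dots> = m (i a) (m (i g) (m g b))" using ga gb by (metis ax(3,5,8,9))
  also have "\<dots> = m (i a) b" using gb cancelL by simp
  finally show ?thesis .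
qed

lemma inv_mul_left: "s a = r b \<Longrightarrow> m (i (m a b)) a = i b"
proof -
  assume ab: "s a = r b"
  have "m (i (m a b)) a = m (m (i b) (i a)) a" using inv_mul ab by simp
  also have "\<dots> = m (i b) (m (i a) a)" by (rule ax(5)) (simp_all add: ax ab)
  also have "\<dots> = m (i b) (s a)" by (simp add: ax(11))
  also have "\<dots> = i b" using ax(7)[of "i b"] ab ax(8)[of b] by simp
  finally show ?thesis .
qed

end

lemma mem_DK: "\<delta> \<in> Delta_K r m i K \<longleftrightarrow> finite \<delta> \<and> \<delta> \<noteq> {} \<and>
      (\<forall>a\<in>\<delta>. \<forall>b\<in>\<delta>. r a = r b \<and> m (i a) b \<in> K)"
  unfolding Delta_K_def by simp

lemma fin_fibres:
  fixes r :: "'g::t2_space \<Rightarrow> 'g"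
  assumes lh: "local_homeo r UNIV (units r)" and K: "compact K"
  shows "\<exists>N. \<forall>u. finite (K \<inter> {x. r x = u}) \<and> card (K \<inter> {x. r x = u}) \<le> N"
proof -
  have ex: "\<exists>U. open U \<and> x \<in> U \<and> inj_on r U" for x
  proof -
    obtain U g where U: "openin (top_of_set UNIV) U" "x \<in> U" "homeomorphism U (r ` U) r g"
      using lh unfolding local_homeo_def by blast
    have "open U" using U(1) by simp
    moreover have "inj_on r U" using U(3) unfolding homeomorphism_def
      by (intro inj_on_inverseI[where g=g]) blast
    ultimately show ?thesis using U(2) by blast
  qed
  have sub: "K \<subseteq> \<Union> {U. open U \<and> inj_on r U}" using ex by blast
  obtain T where T: "T \<subseteq> {U. open U \<and> inj_on r U}" "finite T" "K \<subseteq> \<Union> T"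
    by (rule compactE[OF K sub]) auto
  have "finite (K \<inter> {x. r x = u}) \<and> card (K \<inter> {x. r x = u}) \<le> card T" for u
  proof -
    define f where "f x = (SOME U. U \<in> T \<and> x \<in> U)" for x
    have f: "f x \<in> T \<and> x \<in> f x" if "x \<in> K" for x
    proof -
      have "\<exists>U. U \<in> T \<and> x \<in> U" using T(3) that by blast
      then show ?thesis unfolding f_def by (rule someI_ex)
    qed
    have inj: "inj_on f (K \<inter> {x. r x = u})"
    proof (rule inj_onI)
      fix x y assume xy: "x \<in> K \<inter> {x. r x = u}" "y \<in> K \<inter> {x. r x = u}" "f x = f y"
      have "f x \<in> T" "x \<in> f x" using f xy(1) by auto
      moreover have "y \<in> f x" using f[of y] xy(2,3) by simp
      ultimately have "inj_on r (f x)" "x \<in> f x" "y \<in> f x" using T(1) by auto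
      moreover have "r x = r y" using xy by simp
      ultimately show "x = y" by (meson inj_onD)
    qed
    have sub: "f ` (K \<inter> {x. r x = u}) \<subseteq> T" using f by auto
    show ?thesis using inj_on_finite[OF inj sub T(2)] card_inj_on_le[OF inj sub T(2)] by simp
  qed
  then show ?thesis by blast
qed

theorem proposition3p26:
  fixes s r :: "'g::t2_space \<Rightarrow> 'g" and m :: "'g \<Rightarrow> 'g \<Rightarrow> 'g" and i :: "'g \<Rightarrow> 'g"
    and K :: "'g set"
  assumes "etale_groupoid s r m i" and "compact K"
  shows "G_simplicial_complex s r m i m r (Delta_K r m i K)
       \<and> finite_dimensional (Delta_K r m i K)
       \<and> H1 (Delta_K r m i K)
       \<and> H2 TYPE('i) (Delta_K r m i K)
       \<and> proper_action s m r
       \<and> G_compact s m r (Delta_K r m i K)"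
proof -
  note E = assms(1)[unfolded etale_groupoid_def]
  have G: "groupoid s r m i" and lc: "locally compact (UNIV :: 'g set)"
    and cs: "continuous_on UNIV s" and cr: "continuous_on UNIV r" and ci: "continuous_on UNIV i"
    and cm: "continuous_on {(a, b). s a = r b} (\<lambda>(a, b). m a b)"
    and lh: "local_homeo r UNIV (units r)" using E by blast+
  have Kc: "closed K" using assms(2) compact_imp_closed by blast
  let ?D = "Delta_K r m i K"
  note A = ax[OF G]
  have P1: "G_simplicial_complex s r m i m r ?D"
    unfolding G_simplicial_complex_def
  proof (intro conjI)
    have g1: "\<forall>y. r y \<in> units r" using rr[OF G] by (simp add: units_def)
    have g2: "\<forall>g y. s g = r y \<longrightarrow> r (m g y) = r g" using A(3) by blast
    have g3: "\<forall>y. m (r y) y = y" using A(6) by blast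
    have g4: "\<forall>g h y. s g = r h \<and> s h = r y \<longrightarrow> m (m g h) y = m g (m h y)" using A(5) by blast
    show "G_space s r m i m r"
      unfolding G_space_def by (intro conjI lc g1 g2 g3 g4 cr cm lh)
    show "\<forall>\<delta>\<in>?D. finite \<delta> \<and> \<delta> \<noteq> {} \<and> (\<exists>u. \<forall>y\<in>\<delta>. r y = u)"
    proof
      fix \<delta> assume "\<delta> \<in> ?D"
      then have d: "finite \<delta>" "\<delta> \<noteq> {}" "\<forall>a\<in>\<delta>. \<forall>b\<in>\<delta>. r a = r b \<and> m (i a) b \<in> K"
        unfolding mem_DK by blast+
      then obtain a where "a \<in> \<delta>" by blast
      then have "\<forall>y\<in>\<delta>. r y = r a" using d(3) by blast
      then show "finite \<delta> \<and> \<delta> \<noteq> {} \<and> (\<exists>u. \<forall>y\<in>\<delta>. r y = u)" using d by blast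
    qed
    show "\<forall>\<delta>\<in>?D. \<forall>\<delta>'. \<delta>' \<subseteq> \<delta> \<and> \<delta>' \<noteq> {} \<longrightarrow> \<delta>' \<in> ?D"
    proof (intro ballI allI impI)
      fix \<delta> \<delta>' assume "\<delta> \<in> ?D" and h: "\<delta>' \<subseteq> \<delta> \<and> \<delta>' \<noteq> {}"
      then have d: "finite \<delta>" "\<forall>a\<in>\<delta>. \<forall>b\<in>\<delta>. r a = r b \<and> m (i a) b \<in> K"
        unfolding mem_DK by blast+
      have "finite \<delta>'" using d(1) h finite_subset by blast
      moreover have "\<forall>a\<in>\<delta>'. \<forall>b\<in>\<delta>'. r a = r b \<and> m (i a) b \<in> K" using d(2) h by blast
      ultimately show "\<delta>' \<in> ?D" unfolding mem_DK using h by blast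
    qed
    show "\<forall>\<delta>\<in>?D. \<forall>g. (\<forall>y\<in>\<delta>. r y = s g) \<longrightarrow> m g ` \<delta> \<in> ?D"
    proof (intro ballI allI impI)
      fix \<delta> g assume "\<delta> \<in> ?D" and h: "\<forall>y\<in>\<delta>. r y = s g"
      then have d: "finite \<delta>" "\<delta> \<noteq> {}" "\<forall>a\<in>\<delta>. \<forall>b\<in>\<delta>. r a = r b \<and> m (i a) b \<in> K"
        unfolding mem_DK by blast+
      have "\<forall>x\<in>m g ` \<delta>. \<forall>y\<in>m g ` \<delta>. r x = r y \<and> m (i x) y \<in> K"
      proof (intro ballI)
        fix x y assume "x \<in> m g ` \<delta>" "y \<in> m g ` \<delta>"
        then obtain a b where ab: "a \<in> \<delta>" "b \<in> \<delta>" "x = m g a" "y = m g b" by blast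
        have sa: "s g = r a" and sb: "s g = r b" using h ab(1,2) by auto
        have "r x = r g" "r y = r g" using A(3)[OF sa] A(3)[OF sb] ab(3,4) by simp_all
        moreover have "m (i x) y = m (i a) b" using inv_act[OF G sa sb] ab(3,4) by simp
        moreover have "m (i a) b \<in> K" using d(3) ab(1,2) by blast
        ultimately show "r x = r y \<and> m (i x) y \<in> K" by simp
      qed
      moreover have "finite (m g ` \<delta>)" "m g ` \<delta> \<noteq> {}" using d(1,2) by simp_all
      ultimately show "m g ` \<delta> \<in> ?D" unfolding mem_DK by blast
    qed
  qed
  have P2: "finite_dimensional ?D"
  proof -
    obtain N where N: "\<forall>u. finite (K \<inter> {x. r x = u}) \<and> card (K \<inter> {x. r x = u}) \<le> N"
      using fin_fibres[OF lh assms(2)] by blast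
    have "card \<delta> \<le> N" if d: "\<delta> \<in> ?D" for \<delta>
    proof (cases "\<delta> = {}")
      case True then show ?thesis by simp
    next
      case False
      then obtain a where a: "a \<in> \<delta>" by blast
      have dd: "\<forall>x\<in>\<delta>. \<forall>y\<in>\<delta>. r x = r y \<and> m (i x) y \<in> K"
        using d unfolding mem_DK by blast
      have inj: "inj_on (m (i a)) \<delta>"
      proof (rule inj_onI)
        fix x y assume xy: "x \<in> \<delta>" "y \<in> \<delta>" "m (i a) x = m (i a) y"
        have "r a = r x" "r a = r y" using dd a xy(1,2) by blast+
        then have "x = m a (m (i a) x)" "y = m a (m (i a) y)"
          using cancelL2[OF G] by metis+
        then show "x = y" using xy(3) by simp
      qed
      have sub: "m (i a) ` \<delta> \<subseteq> K \<inter> {x. r x = s a}"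
      proof
        fix z assume "z \<in> m (i a) ` \<delta>"
        then obtain b where b: "b \<in> \<delta>" "z = m (i a) b" by blast
        have "r a = r b" "m (i a) b \<in> K" using dd a b(1) by blast+
        then have "s (i a) = r b" using A(8)[of a] by simp
        then have "r z = s a" using A(3) A(9)[of a] b(2) by simp
        then show "z \<in> K \<inter> {x. r x = s a}" using \<open>m (i a) b \<in> K\<close> b(2) by simp
      qed
      show ?thesis using card_inj_on_le[OF inj sub] N by (meson le_trans)
    qed
    then show ?thesis unfolding finite_dimensional_def by blast
  qed
  have P3: "H1 ?D"
    unfolding H1_def
  proof (intro allI impI)
    fix K' :: "'g set" assume K': "compact K'"
    define T where "T = (K' \<times> K) \<inter> {p. s (fst p) = r (snd p)} \<inter> {p. s (snd p) \<in> K}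
       \<inter> {p. s (fst p) \<in> K} \<inter> {p. i (snd p) \<in> K}"
    have csnd: "continuous_on UNIV (\<lambda>p::'g\<times>'g. s (snd p))"
      by (rule continuous_on_compose2[OF cs continuous_on_snd]) auto
    have cfst: "continuous_on UNIV (\<lambda>p::'g\<times>'g. s (fst p))"
      by (rule continuous_on_compose2[OF cs continuous_on_fst]) auto
    have crsnd: "continuous_on UNIV (\<lambda>p::'g\<times>'g. r (snd p))"
      by (rule continuous_on_compose2[OF cr continuous_on_snd]) auto
    have cisnd: "continuous_on UNIV (\<lambda>p::'g\<times>'g. i (snd p))"
      by (rule continuous_on_compose2[OF ci continuous_on_snd]) auto
    have c1: "closed {p::'g\<times>'g. s (fst p) = r (snd p)}"
      using closed_Collect_eq[OF cfst crsnd] .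
    have c2: "closed {p::'g\<times>'g. s (snd p) \<in> K}"
      using closed_vimage[OF Kc csnd] by (simp add: vimage_def)
    have c3: "closed {p::'g\<times>'g. s (fst p) \<in> K}"
      using closed_vimage[OF Kc cfst] by (simp add: vimage_def)
    have c4: "closed {p::'g\<times>'g. i (snd p) \<in> K}"
      using closed_vimage[OF Kc cisnd] by (simp add: vimage_def)
    have cT: "compact T" unfolding T_def
      by (intro compact_Int_closed compact_Times K' assms(2) c1 c2 c3 c4)
    have mT: "continuous_on T (\<lambda>(a, b). m a b)"
      by (rule continuous_on_subset[OF cm]) (auto simp: T_def)
    have eq: "{y. \<exists>y'\<in>K'. {y, y'} \<in> ?D} = (\<lambda>(a, b). m a b) ` T"
    proof (intro equalityI subsetI)
      fix y assume "y \<in> {y. \<exists>y'\<in>K'. {y, y'} \<in> ?D}"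
      then obtain y' where y': "y' \<in> K'" "{y, y'} \<in> ?D" by blast
      then have h: "r y = r y'" "m (i y) y \<in> K" "m (i y') y' \<in> K" "m (i y) y' \<in> K" "m (i y') y \<in> K"
        unfolding mem_DK by blast+
      define k where "k = m (i y') y"
      have comp: "s (i y') = r y" using h A(8) by simp
      have "(y', k) \<in> T" unfolding T_def
      proof (simp, intro conjI)
        show "y' \<in> K'" "k \<in> K" using y' h k_def by auto
        show "s y' = r k" unfolding k_def using A(3)[OF comp] A(9)[of y'] by simp
        show "s k \<in> K" unfolding k_def using A(4)[OF comp] A(11)[of y] h(2) by simp
        show "s y' \<in> K" using A(11)[of y'] h(3) by simp
        show "i k \<in> K" unfolding k_def using inv_mul[OF G comp] inv_inv[OF G] h(4) by simp
      qed
      moreover have "m y' k = y" unfolding k_def using cancelL2[OF G h(1)[symmetric]] by simp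
      ultimately show "y \<in> (\<lambda>(a, b). m a b) ` T" by (intro image_eqI[of _ _ "(y', k)"]) simp_all
    next
      fix y assume "y \<in> (\<lambda>(a, b). m a b) ` T"
      then obtain y' k where yk: "(y', k) \<in> T" "y = m y' k" by auto
      then have t: "y' \<in> K'" "k \<in> K" "s y' = r k" "s k \<in> K" "s y' \<in> K" "i k \<in> K"
        unfolding T_def by auto
      have "{y, y'} \<in> ?D" unfolding mem_DK
      proof (intro conjI ballI)
        fix a b assume ab: "a \<in> {y, y'}" "b \<in> {y, y'}"
        have ry: "r y = r y'" using yk(2) A(3)[OF t(3)] by simp
        have yy: "m (i y) y \<in> K" using yk(2) A(11)[of y] A(4)[OF t(3)] t(4) by simp
        have y'y': "m (i y') y' \<in> K" using t(5) A(11)[of y'] by simp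
        have y'y: "m (i y') y \<in> K" using yk(2) t(2) cancelL[OF G t(3)] by simp
        have yy': "m (i y) y' \<in> K" using yk(2) t(6) inv_mul_left[OF G t(3)] by simp
        show "r a = r b" using ab ry by auto
        show "m (i a) b \<in> K" using ab yy y'y' y'y yy' by auto
      qed auto
      then show "y \<in> {y. \<exists>y'\<in>K'. {y, y'} \<in> ?D}" using t(1) by blast
    qed
    show "compact {y. \<exists>y'\<in>K'. {y, y'} \<in> ?D}"
      unfolding eq by (rule compact_continuous_image[OF mT cT])
  qed
  have P4: "H2 TYPE('i) ?D"
    unfolding H2_def
  proof (intro allI impI, elim conjE)
    fix k :: nat and F :: "'i filter" and f :: "'i \<Rightarrow> nat \<Rightarrow> 'g" and y :: "nat \<Rightarrow> 'g"
    assume F: "F \<noteq> bot" and lim: "\<forall>j\<le>k. ((\<lambda>l. f l j) \<longlongrightarrow> y j) F"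
      and fD: "\<forall>l. f l ` {..k} \<in> ?D"
    have fr: "r (f l a) = r (f l b) \<and> m (i (f l a)) (f l b) \<in> K" if "a \<le> k" "b \<le> k" for l a b
    proof -
      have "\<forall>x\<in>f l ` {..k}. \<forall>z\<in>f l ` {..k}. r x = r z \<and> m (i x) z \<in> K"
        using fD unfolding mem_DK by blast
      moreover have "f l a \<in> f l ` {..k}" "f l b \<in> f l ` {..k}" using that by simp_all
      ultimately show ?thesis by blast
    qed
    show "y ` {..k} \<in> ?D" unfolding mem_DK
    proof (intro conjI ballI)
      fix x z assume "x \<in> y ` {..k}" "z \<in> y ` {..k}"
      then obtain a b where ab: "a \<le> k" "b \<le> k" "x = y a" "z = y b" by auto
      have la: "((\<lambda>l. f l a) \<longlongrightarrow> y a) F" and lb: "((\<lambda>l. f l b) \<longlongrightarrow> y b) F"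
        using lim ab by auto
      have ra: "((\<lambda>l. r (f l a)) \<longlongrightarrow> r (y a)) F"
        by (rule continuous_on_tendsto_compose[OF cr la]) auto
      have rb: "((\<lambda>l. r (f l b)) \<longlongrightarrow> r (y b)) F"
        by (rule continuous_on_tendsto_compose[OF cr lb]) auto
      have "(\<lambda>l. r (f l a)) = (\<lambda>l. r (f l b))" using fr[OF ab(1,2)] by simp
      then have rb': "((\<lambda>l. r (f l a)) \<longlongrightarrow> r (y b)) F" using rb by simp
      have rab: "r (y a) = r (y b)"
        by (rule tendsto_unique[OF F ra rb'])
      have ia: "((\<lambda>l. i (f l a)) \<longlongrightarrow> i (y a)) F"
        by (rule continuous_on_tendsto_compose[OF ci la]) auto
      have pr: "((\<lambda>l. (i (f l a), f l b)) \<longlongrightarrow> (i (y a), y b)) F"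
        by (rule tendsto_Pair[OF ia lb])
      have mm: "((\<lambda>l. (\<lambda>(a, b). m a b) (i (f l a), f l b)) \<longlongrightarrow> (\<lambda>(a, b). m a b) (i (y a), y b)) F"
        by (rule continuous_on_tendsto_compose[OF cm pr])
          (simp_all add: A(8) rab fr[OF ab(1,2)])
      have mm': "((\<lambda>l. m (i (f l a)) (f l b)) \<longlongrightarrow> m (i (y a)) (y b)) F" using mm by simp
      have ev: "\<forall>\<^sub>F l in F. m (i (f l a)) (f l b) \<in> K" using fr[OF ab(1,2)] by simp
      have "m (i (y a)) (y b) \<in> K"
        by (rule Lim_in_closed_set[OF Kc ev F mm'])
      then show "m (i x) z \<in> K" using ab by simp
      show "r x = r z" using ab rab by simp
    qed auto
  qed
  have P5: "proper_action s m r"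
    unfolding proper_action_def
  proof (intro allI impI)
    fix C :: "('g \<times> 'g) set" assume C: "compact C"
    define D where "D = {p::'g\<times>'g. s (fst p) = s (snd p)}"
    define \<phi> where "\<phi> p = (m (fst p) (i (snd p)), snd p)" for p :: "'g \<times> 'g"
    have csnd: "continuous_on UNIV (\<lambda>p::'g\<times>'g. s (snd p))"
      by (rule continuous_on_compose2[OF cs continuous_on_snd]) auto
    have cfst: "continuous_on UNIV (\<lambda>p::'g\<times>'g. s (fst p))"
      by (rule continuous_on_compose2[OF cs continuous_on_fst]) auto
    have cD: "closed D" unfolding D_def by (rule closed_Collect_eq[OF cfst csnd])
    have cpi: "continuous_on D (\<lambda>p. (fst p, i (snd p)))"
      by (intro continuous_on_Pair continuous_on_fst continuous_on_id
          continuous_on_compose2[OF ci continuous_on_snd]) auto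
    have c1: "continuous_on D (\<lambda>p. (\<lambda>(a, b). m a b) (fst p, i (snd p)))"
      by (rule continuous_on_compose2[OF cm cpi]) (auto simp: D_def A(9))
    have cphi: "continuous_on D \<phi>" unfolding \<phi>_def
      using continuous_on_Pair[OF c1 continuous_on_snd[OF continuous_on_id]] by simp
    have eq: "{(g, y). s g = r y \<and> (m g y, y) \<in> C} = \<phi> ` (C \<inter> D)"
    proof (intro equalityI subsetI)
      fix p assume "p \<in> {(g, y). s g = r y \<and> (m g y, y) \<in> C}"
      then obtain g y where p: "p = (g, y)" "s g = r y" "(m g y, y) \<in> C" by auto
      have "s (m g y) = s y" using p A(4) by metis
      moreover have "m (m g y) (i y) = g"
        using p(2) A(5)[of g y "i y"] A(9,10,7) by metis
      ultimately show "p \<in> \<phi> ` (C \<inter> D)" using p unfolding \<phi>_def D_def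
        by (intro image_eqI[of _ _ "(m g y, y)"]) auto
    next
      fix p assume "p \<in> \<phi> ` (C \<inter> D)"
      then obtain x y where xy: "(x, y) \<in> C" "s x = s y" "p = (m x (i y), y)"
        unfolding \<phi>_def D_def by auto
      have sg: "s (m x (i y)) = r y" using xy A(4,8,9) by metis
      have "m (m x (i y)) y = x" using xy A(5)[of x "i y" y] A(8,9,11,7) by metis
      then show "p \<in> {(g, y). s g = r y \<and> (m g y, y) \<in> C}" using xy sg by auto
    qed
    show "compact {(g, y). s g = r y \<and> (m g y, y) \<in> C}"
      unfolding eq
      by (rule compact_continuous_image[OF continuous_on_subset[OF cphi]])
         (auto intro: compact_Int_closed C cD)
  qed
  have P6: "G_compact s m r ?D"
    unfolding G_compact_def
  proof (intro exI conjI)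
    have "closed {u. r u = u}"
      by (rule closed_Collect_eq[OF cr continuous_on_id'[unfolded id_def]])
    then show "compact (K \<inter> {u. r u = u})"
      using compact_Int_closed[OF assms(2)] by simp
    show "{y. {y} \<in> ?D} = {m g c |g c. c \<in> K \<inter> {u. r u = u} \<and> s g = r c}"
    proof (intro equalityI subsetI)
      fix y assume "y \<in> {y. {y} \<in> ?D}"
      then have "s y \<in> K" unfolding mem_DK using A(11) by auto
      moreover have "r (s y) = s y" "m y (s y) = y" using A by auto
      ultimately show "y \<in> {m g c |g c. c \<in> K \<inter> {u. r u = u} \<and> s g = r c}"
        by force
    next
      fix y assume "y \<in> {m g c |g c. c \<in> K \<inter> {u. r u = u} \<and> s g = r c}"
      then obtain g c where gc: "y = m g c" "c \<in> K" "r c = c" "s g = r c" by auto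
      have "s y = c" using gc A(4) A(1) by metis
      then show "y \<in> {y. {y} \<in> ?D}" unfolding mem_DK using gc A(11) by auto
    qed
  qed
  show ?thesis
    using P1 P2 P3 P4 P5 P6 by blast
qed

end
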